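(* Let ${\cal Q}$ be a collection of partial partitions of a set $X$. Then there is a one-to-one correspondence between the minimal restricted chordal completions of ${\rm int}({\cal Q})$ and the minimal chordal sandwiches of $({\rm int^*}({\cal Q}),{\rm forb}({\cal Q}))$.
   Context: A partial partition of $X$ is a partition $A_1|\ldots|A_t$ ($t\geq 2$) of a non-empty subset of $X$; the $A_i$ are its cells. The partial partition intersection graph ${\rm int}({\cal Q})$ has vertex set $\{(A,\pi): A \text{ is a cell of } \pi\in{\cal Q}\}$, with $(A,\pi)$ and $(A',\pi')$ adjacent iff $A\cap A'\neq\emptyset$. A graph is chordal if it has no induced cycle of length at least four; a chordal completion of $G=(V,E)$ is a chordal graph $(V,E')$ with $E\subseteq E'$. A restricted chordal completion of ${\rm int}({\cal Q})$ is a chordal completion $G'$ of ${\rm int}({\cal Q})$ such that whenever $A_1,A_2$ are distinct cells of the same $\pi\in{\cal Q}$, $(A_1,\pi)$ and $(A_2,\pi)$ are not adjacent in $G'$; it is minimal if no proper subgraph of $G'$ is a restricted chordal completion of ${\rm int}({\cal Q})$. The cell intersection graph ${\rm int^*}({\cal Q})$ has vertex set $\{A: A \text{ is a cell of some } \pi\in{\cal Q}\}$, with $A,A'$ adjacent iff $A\cap A'\neq\emptyset$. The graph ${\rm forb}({\cal Q})$ has the same vertex set, with $A,A'$ adjacent iff $A,A'$ are (distinct) cells of some common $\pi\in{\cal Q}$. For graphs $G_1=(V,E_1)$, $G_2=(V,E_2)$ with $E_1\cap E_2=\emptyset$, a chordal sandwich of $(G_1,G_2)$ is a chordal graph $(V,E')$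 with $E_1\subseteq E'$ and $E'\cap E_2=\emptyset$; it is minimal if no proper subgraph of it is a chordal sandwich of $(G_1,G_2)$. *)

theory Defs
  imports Main
begin

definition is_graph :: "'v set \<Rightarrow> 'v set set \<Rightarrow> bool" where
  "is_graph V E \<longleftrightarrow> (\<forall>e\<in>E. \<exists>u v. u \<noteq> v \<and> u \<in> V \<and> v \<in> V \<and> e = {u, v})"

definition induced_cycle :: "'v set \<Rightarrow> 'v set set \<Rightarrow> 'v list \<Rightarrow> bool" where
  "induced_cycle V E cs \<longleftrightarrow>
     (let k = length cs in
       k \<ge> 4 \<and> distinct cs \<and> set cs \<subseteq> V \<and>
       (\<forall>i<k. {cs ! i, cs ! ((i + 1) mod k)} \<in> E) \<and>
       (\<forall>i<k. \<forall>j<k. i \<noteq> j \<and> j \<noteq> (i + 1) mod k \<and> i \<noteq> (j + 1) mod k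
           \<longrightarrow> {cs ! i, cs ! j} \<notin> E))"

definition chordal :: "'v set \<Rightarrow> 'v set set \<Rightarrow> bool" where
  "chordal V E \<longleftrightarrow> is_graph V E \<and> \<not> (\<exists>cs. induced_cycle V E cs)"

definition chordal_completion :: "'v set \<Rightarrow> 'v set set \<Rightarrow> 'v set set \<Rightarrow> bool" where
  "chordal_completion V E E' \<longleftrightarrow> chordal V E' \<and> E \<subseteq> E'"

definition chordal_sandwich :: "'v set \<Rightarrow> 'v set set \<Rightarrow> 'v set set \<Rightarrow> 'v set set \<Rightarrow> bool" where
  "chordal_sandwich V E1 E2 E' \<longleftrightarrow> chordal V E' \<and> E1 \<subseteq> E' \<and> E' \<inter> E2 = {}"

definition minimal_chordal_sandwich :: "'v set \<Rightarrow> 'v set set \<Rightarrow> 'v set set \<Rightarrow> 'v set set \<Rightarrow> bool" where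
  "minimal_chordal_sandwich V E1 E2 E' \<longleftrightarrow> chordal_sandwich V E1 E2 E' \<and>
     (\<forall>E''. E'' \<subset> E' \<longrightarrow> \<not> chordal_sandwich V E1 E2 E'')"

definition partial_partition :: "'a set \<Rightarrow> 'a set set \<Rightarrow> bool" where
  "partial_partition X \<pi> \<longleftrightarrow>
     (\<forall>A\<in>\<pi>. A \<noteq> {} \<and> A \<subseteq> X) \<and>
     (\<forall>A\<in>\<pi>. \<forall>B\<in>\<pi>. A \<noteq> B \<longrightarrow> A \<inter> B = {}) \<and>
     (\<exists>A\<in>\<pi>. \<exists>B\<in>\<pi>. A \<noteq> B)"

definition int_vertices :: "'a set set set \<Rightarrow> ('a set \<times> 'a set set) set" where
  "int_vertices Q = {(A, \<pi>). \<pi> \<in> Q \<and> A \<in> \<pi>}"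

definition int_edges :: "'a set set set \<Rightarrow> ('a set \<times> 'a set set) set set" where
  "int_edges Q = {{v, w} | v w. v \<in> int_vertices Q \<and> w \<in> int_vertices Q \<and> v \<noteq> w
                              \<and> fst v \<inter> fst w \<noteq> {}}"

definition restricted_chordal_completion ::
    "'a set set set \<Rightarrow> ('a set \<times> 'a set set) set set \<Rightarrow> bool" where
  "restricted_chordal_completion Q E' \<longleftrightarrow>
     chordal_completion (int_vertices Q) (int_edges Q) E' \<and>
     (\<forall>\<pi>\<in>Q. \<forall>A1\<in>\<pi>. \<forall>A2\<in>\<pi>. A1 \<noteq> A2 \<longrightarrow> {(A1, \<pi>), (A2, \<pi>)} \<notin> E')"

definition minimal_restricted_chordal_completion ::
    "'a set set set \<Rightarrow> ('a set \<times> 'a set set) set set \<Rightarrow> bool" where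
  "minimal_restricted_chordal_completion Q E' \<longleftrightarrow> restricted_chordal_completion Q E' \<and>
     (\<forall>E''. E'' \<subset> E' \<longrightarrow> \<not> restricted_chordal_completion Q E'')"

definition cells :: "'a set set set \<Rightarrow> 'a set set" where
  "cells Q = \<Union>Q"

definition int_star_edges :: "'a set set set \<Rightarrow> 'a set set set" where
  "int_star_edges Q = {{A, B} | A B. A \<in> cells Q \<and> B \<in> cells Q \<and> A \<noteq> B \<and> A \<inter> B \<noteq> {}}"

definition forb_edges :: "'a set set set \<Rightarrow> 'a set set set" where
  "forb_edges Q = {{A, B} | A B. A \<noteq> B \<and> (\<exists>\<pi>\<in>Q. A \<in> \<pi> \<and> B \<in> \<pi>)}"

end

theory Submission
  imports Defs
begin



lemma cyc_unf: "induced_cycle V E cs \<longleftrightarrow>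
       length cs \<ge> 4 \<and> distinct cs \<and> set cs \<subseteq> V \<and>
       (\<forall>i<length cs. {cs ! i, cs ! ((i + 1) mod length cs)} \<in> E) \<and>
       (\<forall>i<length cs. \<forall>j<length cs. i \<noteq> j \<and> j \<noteq> (i + 1) mod length cs \<and> i \<noteq> (j + 1) mod length cs
           \<longrightarrow> {cs ! i, cs ! j} \<notin> E)"
  unfolding induced_cycle_def Let_def by simp

lemma cycle_map:
  assumes "induced_cycle V E cs" "inj_on f (set cs)" "f ` set cs \<subseteq> V'"
   "\<And>x y. x \<in> set cs \<Longrightarrow> y \<in> set cs \<Longrightarrow> x \<noteq> y \<Longrightarrow> ({f x, f y} \<in> E' \<longleftrightarrow> {x,y} \<in> E)"
  shows "induced_cycle V' E' (map f cs)"
proof -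
  let ?k = "length cs"
  have c: "?k \<ge> 4" "distinct cs" "set cs \<subseteq> V"
    "\<And>i. i < ?k \<Longrightarrow> {cs ! i, cs ! ((i + 1) mod ?k)} \<in> E"
    "\<And>i j. i < ?k \<Longrightarrow> j < ?k \<Longrightarrow> i \<noteq> j \<Longrightarrow> j \<noteq> (i + 1) mod ?k \<Longrightarrow> i \<noteq> (j + 1) mod ?k
           \<Longrightarrow> {cs ! i, cs ! j} \<notin> E"
    using assms(1) unfolding cyc_unf by auto
  have ne: "cs ! i \<noteq> cs ! j" if "i < ?k" "j < ?k" "i \<noteq> j" for i j
    using c(2) that nth_eq_iff_index_eq by blast
  have modne: "(i + 1) mod ?k \<noteq> i" if "i < ?k" for i
    using c(1) that by (cases "i + 1 = ?k") auto
  show ?thesis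
    unfolding cyc_unf
  proof (intro conjI allI impI)
    show "4 \<le> length (map f cs)" using c by simp
    show "distinct (map f cs)" using c(2) assms(2) by (simp add: distinct_map)
    show "set (map f cs) \<subseteq> V'" using assms(3) by simp
    fix i assume i: "i < length (map f cs)"
    hence i': "i < ?k" by simp
    have m: "(i + 1) mod ?k < ?k" using c(1) by (intro mod_less_divisor) linarith
    show "{map f cs ! i, map f cs ! ((i + 1) mod length (map f cs))} \<in> E'"
      using assms(4)[of "cs!i" "cs ! ((i + 1) mod ?k)"] c(4)[OF i'] ne[OF i' m] modne[OF i'] i' m
      by (simp add: eq_commute[of i])
  next
    fix i j assume "i < length (map f cs)" "j < length (map f cs)" "i \<noteq> j \<and> j \<noteq> (i + 1) mod length (map f cs) \<and> i \<noteq> (j + 1) mod length (map f cs)"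
    hence h: "i < ?k" "j < ?k" "i \<noteq> j" "j \<noteq> (i + 1) mod ?k" "i \<noteq> (j + 1) mod ?k" by auto
    show "{map f cs ! i, map f cs ! j} \<notin> E'"
      using assms(4)[of "cs!i" "cs!j"] c(5)[OF h] ne[OF h(1-3)] h by simp
  qed
qed

lemma cycle_rotate1:
  assumes "induced_cycle V E cs" shows "induced_cycle V E (rotate1 cs)"
proof -
  let ?k = "length cs"
  have c: "?k \<ge> 4" "distinct cs" "set cs \<subseteq> V"
    "\<And>i. i < ?k \<Longrightarrow> {cs ! i, cs ! ((i + 1) mod ?k)} \<in> E"
    "\<And>i j. i < ?k \<Longrightarrow> j < ?k \<Longrightarrow> i \<noteq> j \<Longrightarrow> j \<noteq> (i + 1) mod ?k \<Longrightarrow> i \<noteq> (j + 1) mod ?k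
           \<Longrightarrow> {cs ! i, cs ! j} \<notin> E"
    using assms(1) unfolding cyc_unf by auto
  have md: "(i + 1) mod ?k = (if i + 1 = ?k then 0 else i + 1)" if "i < ?k" for i
    using that by auto
  show ?thesis
    unfolding cyc_unf
  proof (intro conjI allI impI)
    show "4 \<le> length (rotate1 cs)" using c by simp
    show "distinct (rotate1 cs)" using c by simp
    show "set (rotate1 cs) \<subseteq> V" using c by simp
    fix i assume i: "i < length (rotate1 cs)"
    hence i': "i < ?k" by simp
    have m: "(i + 1) mod ?k < ?k" using c(1) by (intro mod_less_divisor) linarith
    show "{rotate1 cs ! i, rotate1 cs ! ((i + 1) mod length (rotate1 cs))} \<in> E"
      using c(4)[OF m] i' m by (simp add: nth_rotate1)
  next
    fix i j assume "i < length (rotate1 cs)" "j < length (rotate1 cs)" "i \<noteq> j \<and> j \<noteq> (i + 1) mod length (rotate1 cs) \<and> i \<noteq> (j + 1) mod length (rotate1 cs)"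
    hence h: "i < ?k" "j < ?k" "i \<noteq> j" "j \<noteq> (i + 1) mod ?k" "i \<noteq> (j + 1) mod ?k" by auto
    have m1: "(i + 1) mod ?k < ?k" "(j + 1) mod ?k < ?k" using c(1) by (intro mod_less_divisor; linarith)+
    have a: "(i + 1) mod ?k \<noteq> (j + 1) mod ?k" "(j + 1) mod ?k \<noteq> ((i + 1) mod ?k + 1) mod ?k"
        "(i + 1) mod ?k \<noteq> ((j + 1) mod ?k + 1) mod ?k"
      using h c(1) by (auto simp: mod_Suc split: if_splits)
    show "{rotate1 cs ! i, rotate1 cs ! j} \<notin> E"
      using c(5)[OF m1 a] h by (simp add: nth_rotate1)
  qed
qed

lemma cycle_rotate: "induced_cycle V E cs \<Longrightarrow> induced_cycle V E (rotate n cs)"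
  by (induction n) (auto intro: cycle_rotate1)




definition induced_path :: "'v set \<Rightarrow> 'v set set \<Rightarrow> 'v list \<Rightarrow> bool" where
  "induced_path V E ys \<longleftrightarrow> distinct ys \<and> set ys \<subseteq> V \<and>
     (\<forall>i. i + 1 < length ys \<longrightarrow> {ys ! i, ys ! (i + 1)} \<in> E) \<and>
     (\<forall>i j. i + 1 < j \<and> j < length ys \<longrightarrow> {ys ! i, ys ! j} \<notin> E)"

lemma path_close:
  assumes p: "induced_path V E ys" and l: "length ys \<ge> 3" and x: "x \<in> V" "x \<notin> set ys"
    and h: "{x, hd ys} \<in> E" and t: "{x, last ys} \<in> E"
    and nint: "\<And>i. 0 < i \<Longrightarrow> i < length ys - 1 \<Longrightarrow> {x, ys ! i} \<notin> E"
  shows "induced_cycle V E (x # ys)"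
proof -
  let ?n = "length ys"
  have p': "distinct ys" "set ys \<subseteq> V" "\<And>i. i + 1 < ?n \<Longrightarrow> {ys ! i, ys ! (i + 1)} \<in> E"
     "\<And>i j. i + 1 < j \<Longrightarrow> j < ?n \<Longrightarrow> {ys ! i, ys ! j} \<notin> E"
    using p unfolding induced_path_def by auto
  have hd0: "hd ys = ys ! 0" using l by (cases ys) auto
  have ne: "ys \<noteq> []" using l by auto
  have lastn: "last ys = ys ! (?n - 1)" using ne by (simp add: last_conv_nth)
  show ?thesis unfolding cyc_unf
  proof (intro conjI allI impI)
    show "4 \<le> length (x # ys)" using l by simp
    show "distinct (x # ys)" using p' x by simp
    show "set (x # ys) \<subseteq> V" using p' x by simp
    fix i assume i: "i < length (x # ys)"
    show "{(x # ys) ! i, (x # ys) ! ((i + 1) mod length (x # ys))} \<in> E"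
    proof (cases "i = ?n")
      case True
      then show ?thesis using t lastn ne by (simp add: insert_commute nth_Cons')
    next
      case False
      hence i2: "i + 1 < Suc ?n" using i by simp
      show ?thesis
      proof (cases i)
        case 0 then show ?thesis using h hd0 ne by simp
      next
        case (Suc m)
        then show ?thesis using p'(3)[of m] i2 by simp
      qed
    qed
  next
    fix i j assume ij: "i < length (x # ys)" "j < length (x # ys)"
      "i \<noteq> j \<and> j \<noteq> (i + 1) mod length (x # ys) \<and> i \<noteq> (j + 1) mod length (x # ys)"
    have md: "(a + 1) mod Suc ?n = (if a = ?n then 0 else a + 1)" if "a < Suc ?n" for a
      using that by auto
    have ij': "i \<le> ?n" "j \<le> ?n" "i \<noteq> j" "j \<noteq> (if i = ?n then 0 else i + 1)" "i \<noteq> (if j = ?n then 0 else j + 1)"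
      using ij md[of i] md[of j] by auto
    show "{(x # ys) ! i, (x # ys) ! j} \<notin> E"
    proof (cases i)
      case 0
      then obtain m where "j = Suc m" using ij' by (cases j) auto
      then show ?thesis using nint[of m] ij' 0 ne by (auto split: if_splits)
    next
      case (Suc a)
      show ?thesis
      proof (cases j)
        case 0
        then show ?thesis using nint[of a] ij' Suc ne by (auto simp: insert_commute split: if_splits)
      next
        case (Suc b)
        have "a + 1 < b \<or> b + 1 < a" using ij' Suc \<open>i = Suc a\<close> by (auto split: if_splits)
        then show ?thesis using p'(4)[of a b] p'(4)[of b a] Suc \<open>i = Suc a\<close> ij'
          by (auto simp: insert_commute)
      qed
    qed
  qed
qed

lemma path_take: "induced_path V E ys \<Longrightarrow> induced_path V E (take m ys)"
  unfolding induced_path_def by (auto dest: in_set_takeD)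

lemma path_drop: "induced_path V E ys \<Longrightarrow> induced_path V E (drop m ys)"
  unfolding induced_path_def
  by (auto dest: in_set_dropD)




lemma path_gap:
  assumes "induced_path V E ys" "length ys \<ge> 2" "x \<in> V" "x \<notin> set ys" "{x, hd ys} \<in> E" "{x, last ys} \<in> E"
  shows "(\<forall>y\<in>set ys. {x,y} \<in> E) \<or> (\<exists>cs. induced_cycle V E cs)"
  using assms
proof (induction "length ys" arbitrary: ys rule: less_induct)
  case less
  let ?n = "length ys"
  have ne: "ys \<noteq> []" using less.prems by auto
  have lastn: "last ys = ys ! (?n - 1)" using ne by (simp add: last_conv_nth)
  have hd0: "hd ys = ys ! 0" using ne by (cases ys) auto
  define P where "P = (\<lambda>i. 0 < i \<and> {x, ys ! i} \<in> E \<and> i < ?n)"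
  have ex: "P (?n - 1)" unfolding P_def using less.prems lastn by auto
  define m where "m = (LEAST i. P i)"
  have Pm: "P m" unfolding m_def using ex by (rule LeastI)
  have lt: "\<And>i. i < m \<Longrightarrow> \<not> P i" unfolding m_def by (rule not_less_Least)
  show ?case
  proof (cases "m = 1")
    case True
    show ?thesis
    proof (cases "?n = 2")
      case True
      obtain a b where ys: "ys = [a, b]" using True
        by (metis One_nat_def length_0_conv length_Suc_conv numeral_2_eq_2)
      have "set ys = {ys ! 0, ys ! 1}" using ys by simp
      then show ?thesis using Pm \<open>m = 1\<close> less.prems(5) hd0 unfolding P_def by auto
    next
      case False
      let ?ys = "drop 1 ys"
      have l: "length ?ys < ?n" "length ?ys \<ge> 2" using less.prems(2) False ne by auto
      have "hd ?ys = ys ! 1" using l by (simp add: hd_drop_conv_nth)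
      moreover have "last ?ys = last ys" using l by (simp add: last_drop)
      moreover have "x \<notin> set ?ys" using less.prems(4) by (auto dest: in_set_dropD)
      ultimately have "(\<forall>y\<in>set ?ys. {x,y} \<in> E) \<or> (\<exists>cs. induced_cycle V E cs)"
        using less.hyps[OF l(1) path_drop[OF less.prems(1)] l(2) less.prems(3)] less.prems(6) Pm True
        unfolding P_def by auto
      moreover have "set ys = insert (hd ys) (set ?ys)" using ne by (cases ys) auto
      ultimately show ?thesis using less.prems(5) by auto
    qed
  next
    case False
    hence m2: "m \<ge> 2" using Pm unfolding P_def by auto
    let ?ys = "take (m + 1) ys"
    have lm: "length ?ys = m + 1" using Pm unfolding P_def by auto
    have "induced_cycle V E (x # ?ys)"
    proof (rule path_close[OF path_take[OF less.prems(1)]])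
      show "3 \<le> length ?ys" using lm m2 by simp
      show "x \<in> V" "x \<notin> set ?ys" using less.prems(3,4) by (auto dest: in_set_takeD)
      show "{x, hd ?ys} \<in> E" using less.prems(5) ne by simp
      have ne': "?ys \<noteq> []" using lm by auto
      have "last ?ys = ?ys ! m" using lm ne' by (simp add: last_conv_nth)
      then show "{x, last ?ys} \<in> E" using Pm lm unfolding P_def by simp
      fix i assume "0 < i" "i < length ?ys - 1"
      then show "{x, ?ys ! i} \<notin> E" using lt[of i] lm Pm unfolding P_def by auto
    qed
    then show ?thesis by blast
  qed
qed




lemma path_transfer:
  assumes "induced_path V E ys" "set ys \<subseteq> W" "W \<subseteq> V'"
    "\<And>a b. a \<in> W \<Longrightarrow> b \<in> W \<Longrightarrow> ({a,b} \<in> E' \<longleftrightarrow> {a,b} \<in> E)"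
  shows "induced_path V' E' ys"
  using assms unfolding induced_path_def by (auto simp: subset_iff)

lemma cycle_tl_path:
  assumes "induced_cycle V E cs"
  shows "induced_path V E (tl cs)" "length (tl cs) \<ge> 3" "hd cs \<notin> set (tl cs)"
    "{hd cs, hd (tl cs)} \<in> E" "{hd cs, last (tl cs)} \<in> E" "{hd cs, tl cs ! 1} \<notin> E"
    "cs = hd cs # tl cs"
proof -
  let ?k = "length cs"
  have c: "?k \<ge> 4" "distinct cs" "set cs \<subseteq> V"
    "\<And>i. i < ?k \<Longrightarrow> {cs ! i, cs ! ((i + 1) mod ?k)} \<in> E"
    "\<And>i j. i < ?k \<Longrightarrow> j < ?k \<Longrightarrow> i \<noteq> j \<Longrightarrow> j \<noteq> (i + 1) mod ?k \<Longrightarrow> i \<noteq> (j + 1) mod ?k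
           \<Longrightarrow> {cs ! i, cs ! j} \<notin> E"
    using assms(1) unfolding cyc_unf by auto
  obtain c0 ys where cs: "cs = c0 # ys" using c(1) by (cases cs) auto
  show "cs = hd cs # tl cs" using cs by simp
  have ly: "length ys = ?k - 1" using cs by simp
  show "length (tl cs) \<ge> 3" using cs c(1) by simp
  show "hd cs \<notin> set (tl cs)" using cs c(2) by simp
  have m01: "(0 + 1) mod ?k = 1" using c(1) by auto
  have "{cs ! 0, cs ! ((0 + 1) mod ?k)} \<in> E" using c(4)[of 0] c(1) by linarith
  hence e1: "{cs ! 0, cs ! 1} \<in> E" unfolding m01 .
  have "hd (tl cs) = cs ! 1" "hd cs = cs ! 0" using cs c(1) by (cases ys; auto)+
  then show "{hd cs, hd (tl cs)} \<in> E" using e1 by simp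
  have mk: "(?k - 1 + 1) mod ?k = 0" proof - have "?k - 1 + 1 = ?k" using c(1) by linarith thus ?thesis by simp qed
  have "{cs ! (?k - 1), cs ! ((?k - 1 + 1) mod ?k)} \<in> E" using c(4)[of "?k - 1"] c(1) by linarith
  hence "{cs ! (?k - 1), cs ! 0} \<in> E" unfolding mk .
  moreover have "last (tl cs) = cs ! (?k - 1)"
  proof -
    have yne: "ys \<noteq> []" using cs c(1) by auto
    have "last (tl cs) = ys ! (length ys - 1)" using cs yne by (simp add: last_conv_nth)
    moreover have "?k - 1 = length ys" using cs by simp
    moreover have "(c0 # ys) ! (length ys) = ys ! (length ys - 1)" using yne by (simp add: nth_Cons')
    ultimately show ?thesis using cs by simp
  qed
  moreover have "hd cs = cs ! 0" using cs by simp
  ultimately show "{hd cs, last (tl cs)} \<in> E" by (simp add: insert_commute)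
  have "{cs ! 0, cs ! 2} \<notin> E" using c(5)[of 0 2] c(1) cs by simp
  then show "{hd cs, tl cs ! 1} \<notin> E" using cs by simp
  show "induced_path V E (tl cs)"
    unfolding induced_path_def
  proof (intro conjI allI impI)
    show "distinct (tl cs)" "set (tl cs) \<subseteq> V" using c(2,3) cs by auto
    fix i assume i: "i + 1 < length (tl cs)"
    have ii: "i + 1 < ?k" using i cs by simp
    have m: "(i + 1 + 1) mod ?k = i + 2" using i cs by simp
    have "{cs ! (i+1), cs ! ((i + 1 + 1) mod ?k)} \<in> E" by (rule c(4)[OF ii])
    hence "{cs ! (i+1), cs ! (i + 2)} \<in> E" unfolding m .
    then show "{tl cs ! i, tl cs ! (i + 1)} \<in> E" using cs by simp
  next
    fix i j assume ij: "i + 1 < j \<and> j < length (tl cs)"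
    have a1: "i+1 < ?k" "j+1 < ?k" "i+1 \<noteq> j+1" using ij cs by auto
    have m: "(i + 1 + 1) mod ?k = i + 2" using ij cs by simp
    have a2: "j+1 \<noteq> (i + 1 + 1) mod ?k" unfolding m using ij by simp
    have a3: "i+1 \<noteq> (j + 1 + 1) mod ?k"
    proof (cases "j + 2 = ?k")
      case True
      hence "(j + 1 + 1) mod ?k = 0" by simp
      thus ?thesis by simp
    next
      case False
      hence "(j + 1 + 1) mod ?k = j + 2" using a1 by simp
      thus ?thesis using ij by simp
    qed
    have "{cs ! (i+1), cs ! (j+1)} \<notin> E" by (rule c(5)[OF a1 a2 a3])
    then show "{tl cs ! i, tl cs ! j} \<notin> E" using cs by simp
  qed
qed




lemma dbl_mem:
  assumes "\<And>x y. R x y \<Longrightarrow> R y x"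
  shows "{a,b} \<in> {{x,y} | x y. R x y} \<longleftrightarrow> R a b"
proof
  assume "{a,b} \<in> {{x,y} | x y. R x y}"
  then obtain x y where "{a,b} = {x,y}" "R x y" by blast
  then show "R a b" using assms by (auto simp: doubleton_eq_iff)
qed blast

definition Qt :: "'v set set \<Rightarrow> 'v set set \<Rightarrow> 'v set set set" where
  "Qt H P = {{C,D} | C D. C \<in> P \<and> D \<in> P \<and> C \<noteq> D \<and> (\<forall>x\<in>C. \<forall>y\<in>D. {x,y} \<in> H)}"

lemma Qt_mem: "{C,D} \<in> Qt H P \<longleftrightarrow> C \<in> P \<and> D \<in> P \<and> C \<noteq> D \<and> (\<forall>x\<in>C. \<forall>y\<in>D. {x,y} \<in> H)"
  unfolding Qt_def
proof (rule dbl_mem)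
  fix C D assume a: "C \<in> P \<and> D \<in> P \<and> C \<noteq> D \<and> (\<forall>x\<in>C. \<forall>y\<in>D. {x, y} \<in> H)"
  have "\<forall>x\<in>D. \<forall>y\<in>C. {x, y} \<in> H"
  proof (intro ballI)
    fix x y assume "x \<in> D" "y \<in> C"
    hence "{y, x} \<in> H" using a by blast
    thus "{x, y} \<in> H" by (simp add: insert_commute)
  qed
  thus "D \<in> P \<and> C \<in> P \<and> D \<noteq> C \<and> (\<forall>x\<in>D. \<forall>y\<in>C. {x, y} \<in> H)" using a by blast
qed

definition clique_part :: "'v set \<Rightarrow> 'v set set \<Rightarrow> 'v set set \<Rightarrow> bool" where
  "clique_part V H P \<longleftrightarrow> (\<forall>C\<in>P. C \<noteq> {} \<and> C \<subseteq> V \<and> (\<forall>x\<in>C. \<forall>y\<in>C. x \<noteq> y \<longrightarrow> {x,y} \<in> H)) \<and>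
     (\<forall>C\<in>P. \<forall>D\<in>P. C \<noteq> D \<longrightarrow> C \<inter> D = {})"

lemma quot_chordal:
  assumes fV: "finite V" and cp: "clique_part V H P" and nc: "\<not>(\<exists>cs. induced_cycle V H cs)"
  shows "\<not>(\<exists>cs. induced_cycle P (Qt H P) cs)"
  using cp
proof (induction "\<Sum>C\<in>P. card C - 1" arbitrary: P rule: less_induct)
  case less
  have cpP: "\<And>C. C \<in> P \<Longrightarrow> C \<noteq> {} \<and> C \<subseteq> V \<and> (\<forall>x\<in>C. \<forall>y\<in>C. x \<noteq> y \<longrightarrow> {x,y} \<in> H)"
    "\<And>C D. C \<in> P \<Longrightarrow> D \<in> P \<Longrightarrow> C \<noteq> D \<Longrightarrow> C \<inter> D = {}"
    using less.prems unfolding clique_part_def by auto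
  have finP: "finite P" using cpP(1) fV by (meson PowI finite_Pow_iff finite_subset subsetI)
  have finC: "\<And>C. C \<in> P \<Longrightarrow> finite C" using cpP(1) fV finite_subset by blast
  show ?case
  proof (cases "\<forall>C\<in>P. card C = 1")
    case True
    have sing: "C = {the_elem C}" if "C \<in> P" for C
    proof -
      have "card C = 1" using True that by blast
      then obtain x where "C = {x}" by (rule card_1_singletonE)
      thus ?thesis by simp
    qed
    show ?thesis
    proof
      assume "\<exists>cs. induced_cycle P (Qt H P) cs"
      then obtain cs where cs: "induced_cycle P (Qt H P) cs" by blast
      have sP: "set cs \<subseteq> P" using cs unfolding cyc_unf by auto
      have "induced_cycle V H (map the_elem cs)"
      proof (rule cycle_map[OF cs])
        show "inj_on the_elem (set cs)"
        proof (rule inj_onI)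
          fix x y assume "x \<in> set cs" "y \<in> set cs" "the_elem x = the_elem y"
          then show "x = y" using sing[of x] sing[of y] sP by auto
        qed
        show "the_elem ` set cs \<subseteq> V"
        proof
          fix z assume "z \<in> the_elem ` set cs"
          then obtain x where x: "x \<in> set cs" "z = the_elem x" by blast
          hence "x \<in> P" using sP by auto
          hence "z \<in> x" "x \<subseteq> V" using sing[of x] cpP(1)[of x] x by auto
          thus "z \<in> V" by auto
        qed
        fix x y assume xy: "x \<in> set cs" "y \<in> set cs" "x \<noteq> y"
        then have "x = {the_elem x}" "y = {the_elem y}" "x \<in> P" "y \<in> P" using sP sing by auto
        then show "({the_elem x, the_elem y} \<in> H) = ({x, y} \<in> Qt H P)"
          using xy(3) unfolding Qt_mem by (metis (no_types, lifting) singletonD singletonI)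
      qed
      then show False using nc by blast
    qed
  next
    case False
    then obtain C where CP: "C \<in> P" and c1: "card C \<noteq> 1" by blast
    have c0: "card C > 0" using cpP(1)[OF CP] finC[OF CP] by (simp add: card_gt_0_iff)
    have c2: "card C \<ge> 2" using c0 c1 by linarith
    obtain v where vC: "v \<in> C" using cpP(1)[OF CP] by blast
    define C' where "C' = C - {v}"
    have cardC': "card C' = card C - 1" unfolding C'_def using vC finC[OF CP] by simp
    have C'ne: "C' \<noteq> {}" using cardC' c2 by (cases "C' = {}") auto
    have C'sub: "C' \<subseteq> C" unfolding C'_def by auto
    have C'notin: "C' \<notin> P - {C}"
    proof
      assume a: "C' \<in> P - {C}"
      hence "C' \<inter> C = {}" using cpP(2)[OF _ CP] by auto
      thus False using C'ne C'sub by auto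
    qed
    have vnotin: "{v} \<notin> P - {C}"
    proof
      assume a: "{v} \<in> P - {C}"
      hence "{v} \<inter> C = {}" using cpP(2)[OF _ CP] by auto
      thus False using vC by auto
    qed
    have C'v: "C' \<noteq> {v}" unfolding C'_def by auto
    define P' where "P' = insert C' (insert {v} (P - {C}))"
    have finP': "finite P'" unfolding P'_def using finP by simp
    have cl1: "\<forall>D\<in>P'. D \<noteq> {} \<and> D \<subseteq> V \<and> (\<forall>x\<in>D. \<forall>y\<in>D. x \<noteq> y \<longrightarrow> {x, y} \<in> H)"
    proof
      fix D assume "D \<in> P'"
      then have "D \<subseteq> C \<or> D \<in> P" unfolding P'_def C'_def using vC by auto
      moreover have "D \<noteq> {}" using \<open>D \<in> P'\<close> C'ne cpP(1) unfolding P'_def by auto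
      ultimately show "D \<noteq> {} \<and> D \<subseteq> V \<and> (\<forall>x\<in>D. \<forall>y\<in>D. x \<noteq> y \<longrightarrow> {x, y} \<in> H)"
        using cpP(1) CP by blast
    qed
    have cl2: "\<forall>D\<in>P'. \<forall>E\<in>P'. D \<noteq> E \<longrightarrow> D \<inter> E = {}"
      using cpP(2) CP vC unfolding P'_def C'_def by auto
    have cpP': "clique_part V H P'"
      unfolding clique_part_def using cl1 cl2 by (rule conjI)
    have meas: "(\<Sum>D\<in>P'. card D - 1) < (\<Sum>D\<in>P. card D - 1)"
    proof -
      have "(\<Sum>D\<in>P'. card D - 1) = (card C' - 1) + ((card {v} - 1) + (\<Sum>D\<in>P - {C}. card D - 1))"
        unfolding P'_def using finP C'notin vnotin C'v by (simp add: sum.insert)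
      also have "\<dots> = (card C - 2) + (\<Sum>D\<in>P - {C}. card D - 1)" using cardC' by simp
      also have "\<dots> < (card C - 1) + (\<Sum>D\<in>P - {C}. card D - 1)" using c2 by simp
      also have "\<dots> = (\<Sum>D\<in>P. card D - 1)" using finP CP by (simp add: sum.remove)
      finally show ?thesis .
    qed
    have IH: "\<not>(\<exists>cs. induced_cycle P' (Qt H P') cs)" using less.hyps[OF meas cpP'] .
    have agree: "\<And>D E. D \<in> P - {C} \<Longrightarrow> E \<in> P - {C} \<Longrightarrow> ({D,E} \<in> Qt H P' \<longleftrightarrow> {D,E} \<in> Qt H P)"
      unfolding Qt_mem P'_def by auto
    show ?thesis
    proof
      assume "\<exists>cs. induced_cycle P (Qt H P) cs"
      then obtain cs where cs: "induced_cycle P (Qt H P) cs" by blast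
      have sP: "set cs \<subseteq> P" using cs unfolding cyc_unf by auto
      show False
      proof (cases "C \<in> set cs")
        case False
        have "induced_cycle P' (Qt H P') (map id cs)"
        proof (rule cycle_map[OF cs])
          show "inj_on id (set cs)" by simp
          show "id ` set cs \<subseteq> P'" using sP False unfolding P'_def by auto
          fix x y assume "x \<in> set cs" "y \<in> set cs" "x \<noteq> y"
          then show "({id x, id y} \<in> Qt H P') = ({x, y} \<in> Qt H P)" using agree sP False by auto
        qed
        then show False using IH by blast
      next
        case True
        then obtain m where m: "m < length cs" "cs ! m = C" by (meson in_set_conv_nth)
        define cs2 where "cs2 = rotate m cs"
        have cs2: "induced_cycle P (Qt H P) cs2" unfolding cs2_def by (rule cycle_rotate[OF cs])
        have "cs2 ! 0 = C" unfolding cs2_def using m nth_rotate[of 0 cs m] by (cases cs) auto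
        moreover have "cs2 \<noteq> []" using m unfolding cs2_def by auto
        ultimately have hd2: "hd cs2 = C" by (simp add: hd_conv_nth)
        note T = cycle_tl_path[OF cs2]
        define ys where "ys = tl cs2"
        have ysP: "set ys \<subseteq> P - {C}" using T(1,3) hd2 unfolding ys_def induced_path_def by auto
        have yp: "induced_path P' (Qt H P') ys"
          by (rule path_transfer[OF T(1)[folded ys_def] ysP _ agree]) (auto simp: P'_def)
        have ly: "length ys \<ge> 3" using T(2) unfolding ys_def .
        have ys1: "ys ! 1 \<in> set ys" using ly by simp
        have hdin: "hd ys \<in> set ys" "last ys \<in> set ys" using ly by (auto intro: hd_in_set last_in_set)
        have adj: "{x, ys ! 1} \<in> Qt H P'" if x: "x \<in> P'" "x \<subseteq> C" "x \<noteq> {}" for x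
        proof -
          have xn: "x \<notin> set ys"
          proof
            assume "x \<in> set ys"
            hence "x \<in> P - {C}" using ysP by auto
            hence "x \<inter> C = {}" using cpP(2)[OF _ CP] by auto
            thus False using x by auto
          qed
          have e: "{x, D} \<in> Qt H P'" if D: "D \<in> set ys" "{C, D} \<in> Qt H P" for D
            using D x xn ysP unfolding Qt_mem P'_def by auto
          have "(\<forall>y\<in>set ys. {x,y} \<in> Qt H P') \<or> (\<exists>cs. induced_cycle P' (Qt H P') cs)"
            apply (rule path_gap[OF yp])
            using ly x(1) xn e hdin T(4,5) hd2 unfolding ys_def by auto
          then show ?thesis using IH ys1 by blast
        qed
        have a1: "{C', ys ! 1} \<in> Qt H P'" using adj[of C'] C'ne C'sub unfolding P'_def by auto
        have a2: "{{v}, ys ! 1} \<in> Qt H P'" using adj[of "{v}"] vC unfolding P'_def by auto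
        have "{C, ys ! 1} \<in> Qt H P"
          unfolding Qt_mem
        proof (intro conjI ballI)
          show "C \<in> P" by fact
          show "ys ! 1 \<in> P" using ys1 ysP by auto
          show "C \<noteq> ys ! 1" using ys1 ysP by auto
          fix a b assume "a \<in> C" "b \<in> ys ! 1"
          then show "{a, b} \<in> H" using a1 a2 unfolding Qt_mem C'_def by auto
        qed
        then show False using T(6) hd2 unfolding ys_def by simp
      qed
    qed
  qed
qed




definition Phi :: "'a set set set \<Rightarrow> 'a set set set \<Rightarrow> ('a set \<times> 'a set set) set set" where
  "Phi Q F = {{v,w} | v w. v \<in> int_vertices Q \<and> w \<in> int_vertices Q \<and> v \<noteq> w \<and> (fst v = fst w \<or> {fst v, fst w} \<in> F)}"

lemma Phi_mem: "{v,w} \<in> Phi Q F \<longleftrightarrow> v \<in> int_vertices Q \<and> w \<in> int_vertices Q \<and> v \<noteq> w \<and> (fst v = fst w \<or> {fst v, fst w} \<in> F)"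
  unfolding Phi_def by (rule dbl_mem) (auto simp: insert_commute)

lemma int_vertices_mem: "(A, \<pi>) \<in> int_vertices Q \<longleftrightarrow> \<pi> \<in> Q \<and> A \<in> \<pi>"
  unfolding int_vertices_def by simp

lemma fst_cells: "v \<in> int_vertices Q \<Longrightarrow> fst v \<in> cells Q"
  unfolding int_vertices_def cells_def by auto

lemma cells_vertex: "A \<in> cells Q \<Longrightarrow> \<exists>\<pi>. (A, \<pi>) \<in> int_vertices Q"
  unfolding int_vertices_def cells_def by auto

lemma Phi_graph: "is_graph (int_vertices Q) (Phi Q F)"
  unfolding is_graph_def Phi_def by blast

lemma cycle_adj_consec:
  assumes "induced_cycle V E cs" "i < length cs" "j < length cs" "i \<noteq> j" "{cs ! i, cs ! j} \<in> E"
  shows "j = (i + 1) mod length cs \<or> i = (j + 1) mod length cs"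
  using assms unfolding cyc_unf by blast

lemma phi_chordal:
  assumes ch: "chordal (cells Q) F"
  shows "chordal (int_vertices Q) (Phi Q F)"
  unfolding chordal_def
proof (intro conjI Phi_graph notI)
  assume "\<exists>cs. induced_cycle (int_vertices Q) (Phi Q F) cs"
  then obtain cs where cs: "induced_cycle (int_vertices Q) (Phi Q F) cs" by blast
  let ?k = "length cs"
  have c: "?k \<ge> 4" "distinct cs" "set cs \<subseteq> int_vertices Q" using cs unfolding cyc_unf by auto
  have twin: False if ab: "a < ?k" "(a + 1) mod ?k < ?k" "fst (cs ! a) = fst (cs ! ((a + 1) mod ?k))" for a
  proof -
    define cs2 where "cs2 = rotate a cs"
    have cs2: "induced_cycle (int_vertices Q) (Phi Q F) cs2" unfolding cs2_def by (rule cycle_rotate[OF cs])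
    have n0: "cs2 ! 0 = cs ! a" unfolding cs2_def using nth_rotate[of 0 cs a] ab c(1) by (cases cs) auto
    have n1: "cs2 ! 1 = cs ! ((a + 1) mod ?k)" unfolding cs2_def using nth_rotate[of 1 cs a] c(1) by simp
    note T = cycle_tl_path[OF cs2]
    have l2: "length cs2 \<ge> 4" using c(1) unfolding cs2_def by simp
    have d: "\<And>i. i < length cs2 \<Longrightarrow> drop i cs2 = cs2 ! i # drop (Suc i) cs2"
      by (simp add: Cons_nth_drop_Suc)
    have "cs2 = cs2 ! 0 # cs2 ! 1 # cs2 ! 2 # drop 3 cs2"
    proof -
      have ne2: "cs2 \<noteq> []" using l2 by auto
      show ?thesis using d[of 0] d[of 1] d[of 2] l2 ne2 by (simp add: numeral_eq_Suc)
    qed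
    then obtain x y z ws where cs2e: "cs2 = x # y # z # ws" by blast
    have "{y, z} \<in> Phi Q F" using T(1) unfolding induced_path_def cs2e by (auto dest: spec[of _ 0])
    moreover have "fst x = fst y" using n0 n1 ab cs2e by simp
    moreover have "x \<noteq> z" "x \<in> int_vertices Q" using T(3) cs2e c(3) set_rotate[of a cs] unfolding cs2_def
      by auto
    ultimately have "{x, z} \<in> Phi Q F" unfolding Phi_mem by auto
    moreover have "{x, z} \<notin> Phi Q F" using T(6) cs2e by simp
    ultimately show False by simp
  qed
  have inj: "inj_on fst (set cs)"
  proof (rule inj_onI)
    fix v w assume vw: "v \<in> set cs" "w \<in> set cs" "fst v = fst w"
    show "v = w"
    proof (rule ccontr)
      assume ne: "v \<noteq> w"
      obtain i j where ij: "i < ?k" "j < ?k" "cs ! i = v" "cs ! j = w" using vw by (meson in_set_conv_nth)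
      have "i \<noteq> j" using ij ne by auto
      moreover have "{cs ! i, cs ! j} \<in> Phi Q F" unfolding Phi_mem using ij ne vw c(3) by auto
      ultimately have "j = (i + 1) mod ?k \<or> i = (j + 1) mod ?k" using cycle_adj_consec[OF cs ij(1,2)] by blast
      then show False
      proof
        assume "j = (i + 1) mod ?k" then show False using twin[of i] ij vw by auto
      next
        assume "i = (j + 1) mod ?k" then show False using twin[of j] ij vw by auto
      qed
    qed
  qed
  have "induced_cycle (cells Q) F (map fst cs)"
  proof (rule cycle_map[OF cs inj])
    show "fst ` set cs \<subseteq> cells Q" using c(3) fst_cells by blast
    fix x y assume xy: "x \<in> set cs" "y \<in> set cs" "x \<noteq> y"
    hence "fst x \<noteq> fst y" using inj by (auto dest: inj_onD)
    then show "({fst x, fst y} \<in> F) = ({x, y} \<in> Phi Q F)" unfolding Phi_mem using xy c(3) by auto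
  qed
  then show False using ch unfolding chordal_def by blast
qed




lemma phi_mono: "F1 \<subseteq> F2 \<Longrightarrow> Phi Q F1 \<subseteq> Phi Q F2"
  unfolding Phi_def by blast

lemma phi_rev:
  assumes g: "is_graph (cells Q) F1" and s: "Phi Q F1 \<subseteq> Phi Q F2"
  shows "F1 \<subseteq> F2"
proof
  fix e assume e: "e \<in> F1"
  then obtain A B where AB: "A \<noteq> B" "A \<in> cells Q" "B \<in> cells Q" "e = {A, B}"
    using g unfolding is_graph_def by meson
  obtain \<pi> where v1: "(A, \<pi>) \<in> int_vertices Q" using AB(2) cells_vertex by blast
  obtain \<pi>' where v2: "(B, \<pi>') \<in> int_vertices Q" using AB(3) cells_vertex by blast
  have ne: "(A, \<pi>) \<noteq> (B, \<pi>')" using AB(1) by simp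
  have "{A, B} \<in> F1" using e AB(4) by simp
  hence "{(A, \<pi>), (B, \<pi>')} \<in> Phi Q F1" unfolding Phi_mem using v1 v2 ne by simp
  hence "{(A, \<pi>), (B, \<pi>')} \<in> Phi Q F2" using s by (rule subsetD[rotated])
  hence "A = B \<or> {A, B} \<in> F2" unfolding Phi_mem by simp
  thus "e \<in> F2" using AB(1,4) by simp
qed

lemma phi_restricted:
  assumes "chordal_sandwich (cells Q) (int_star_edges Q) (forb_edges Q) F"
  shows "restricted_chordal_completion Q (Phi Q F)"
proof -
  have ch: "chordal (cells Q) F" and sub: "int_star_edges Q \<subseteq> F" and dis: "F \<inter> forb_edges Q = {}"
    using assms unfolding chordal_sandwich_def by auto
  have "int_edges Q \<subseteq> Phi Q F"
  proof
    fix e assume "e \<in> int_edges Q"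
    then obtain v w where vw: "e = {v,w}" "v \<in> int_vertices Q" "w \<in> int_vertices Q" "v \<noteq> w"
      "fst v \<inter> fst w \<noteq> {}" unfolding int_edges_def by blast
    show "e \<in> Phi Q F"
    proof (cases "fst v = fst w")
      case True then show ?thesis unfolding vw(1) Phi_mem using vw by auto
    next
      case False
      have "{fst v, fst w} \<in> int_star_edges Q"
        unfolding int_star_edges_def using False vw(2,3,5) fst_cells[of v Q] fst_cells[of w Q] by blast
      then show ?thesis unfolding vw(1) Phi_mem using vw sub by auto
    qed
  qed
  moreover have "\<forall>\<pi>\<in>Q. \<forall>A1\<in>\<pi>. \<forall>A2\<in>\<pi>. A1 \<noteq> A2 \<longrightarrow> {(A1, \<pi>), (A2, \<pi>)} \<notin> Phi Q F"
  proof (intro ballI impI notI)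
    fix \<pi> A1 A2 assume a: "\<pi> \<in> Q" "A1 \<in> \<pi>" "A2 \<in> \<pi>" "A1 \<noteq> A2" "{(A1, \<pi>), (A2, \<pi>)} \<in> Phi Q F"
    hence "{A1, A2} \<in> F" unfolding Phi_mem by auto
    moreover have "{A1, A2} \<in> forb_edges Q" unfolding forb_edges_def using a by blast
    ultimately show False using dis by blast
  qed
  ultimately show ?thesis
    unfolding restricted_chordal_completion_def chordal_completion_def using phi_chordal[OF ch] by blast
qed

definition Fall :: "'a set set set \<Rightarrow> ('a set \<times> 'a set set) set set \<Rightarrow> 'a set set set" where
  "Fall Q H = {{A,B} | A B. A \<in> cells Q \<and> B \<in> cells Q \<and> A \<noteq> B \<and>
     (\<forall>v\<in>int_vertices Q. \<forall>w\<in>int_vertices Q. fst v = A \<longrightarrow> fst w = B \<longrightarrow> {v,w} \<in> H)}"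

lemma Fall_mem: "{A,B} \<in> Fall Q H \<longleftrightarrow> A \<in> cells Q \<and> B \<in> cells Q \<and> A \<noteq> B \<and>
     (\<forall>v\<in>int_vertices Q. \<forall>w\<in>int_vertices Q. fst v = A \<longrightarrow> fst w = B \<longrightarrow> {v,w} \<in> H)"
  unfolding Fall_def
proof (rule dbl_mem)
  fix A B assume a: "A \<in> cells Q \<and> B \<in> cells Q \<and> A \<noteq> B \<and>
     (\<forall>v\<in>int_vertices Q. \<forall>w\<in>int_vertices Q. fst v = A \<longrightarrow> fst w = B \<longrightarrow> {v,w} \<in> H)"
  have "\<forall>v\<in>int_vertices Q. \<forall>w\<in>int_vertices Q. fst v = B \<longrightarrow> fst w = A \<longrightarrow> {v,w} \<in> H"
  proof (intro ballI impI)
    fix v w assume "v \<in> int_vertices Q" "w \<in> int_vertices Q" "fst v = B" "fst w = A"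
    hence "{w, v} \<in> H" using a by blast
    thus "{v, w} \<in> H" by (simp add: insert_commute)
  qed
  thus "B \<in> cells Q \<and> A \<in> cells Q \<and> B \<noteq> A \<and>
     (\<forall>v\<in>int_vertices Q. \<forall>w\<in>int_vertices Q. fst v = B \<longrightarrow> fst w = A \<longrightarrow> {v,w} \<in> H)" using a by blast
qed

lemma key:
  assumes fX: "finite X" and pp: "\<forall>\<pi>\<in>Q. partial_partition X \<pi>"
    and H: "restricted_chordal_completion Q H"
  shows "chordal_sandwich (cells Q) (int_star_edges Q) (forb_edges Q) (Fall Q H) \<and> Phi Q (Fall Q H) \<subseteq> H"
proof -
  let ?V = "int_vertices Q"
  have H1: "chordal_completion ?V (int_edges Q) H"
    and rH0: "\<forall>\<pi>\<in>Q. \<forall>A1\<in>\<pi>. \<forall>A2\<in>\<pi>. A1 \<noteq> A2 \<longrightarrow> {(A1, \<pi>), (A2, \<pi>)} \<notin> H"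
    using H unfolding restricted_chordal_completion_def by blast+
  have chH: "chordal ?V H" and intH: "int_edges Q \<subseteq> H"
    using H1 unfolding chordal_completion_def by blast+
  have rH: "\<And>\<pi> A1 A2. \<pi> \<in> Q \<Longrightarrow> A1 \<in> \<pi> \<Longrightarrow> A2 \<in> \<pi> \<Longrightarrow> A1 \<noteq> A2 \<Longrightarrow> {(A1, \<pi>), (A2, \<pi>)} \<notin> H"
    using rH0 by blast
  have cellne: "A \<noteq> {}" if Ac: "A \<in> cells Q" for A
  proof -
    obtain \<pi> where "\<pi> \<in> Q" "A \<in> \<pi>" using Ac unfolding cells_def by blast
    moreover have "partial_partition X \<pi>" using pp \<open>\<pi> \<in> Q\<close> by blast
    ultimately show ?thesis unfolding partial_partition_def by blast
  qed
  have vne: "fst v \<noteq> {}" if "v \<in> ?V" for v using cellne fst_cells that by blast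
  have finV: "finite ?V"
  proof (rule finite_subset)
    show "?V \<subseteq> Pow X \<times> Pow (Pow X)"
    proof
      fix v assume "v \<in> ?V"
      moreover obtain A \<pi> where v0: "v = (A, \<pi>)" by (cases v)
      ultimately have v: "v = (A, \<pi>)" "\<pi> \<in> Q" "A \<in> \<pi>" using int_vertices_mem by auto
      have "partial_partition X \<pi>" using pp v(2) by blast
      hence "\<forall>B\<in>\<pi>. B \<noteq> {} \<and> B \<subseteq> X" unfolding partial_partition_def by (elim conjE)
      thus "v \<in> Pow X \<times> Pow (Pow X)" using v by auto
    qed
    show "finite (Pow X \<times> Pow (Pow X))" using fX by simp
  qed
  have intedge: "{v, w} \<in> H" if "v \<in> ?V" "w \<in> ?V" "v \<noteq> w" "fst v \<inter> fst w \<noteq> {}" for v w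
  proof -
    have "{v, w} \<in> int_edges Q" unfolding int_edges_def using that by blast
    thus ?thesis using intH by blast
  qed
  define Kc where "Kc A = {v \<in> ?V. fst v = A}" for A
  define P where "P = Kc ` cells Q"
  have Kcne: "Kc A \<noteq> {}" if "A \<in> cells Q" for A
    using cells_vertex[OF that] unfolding Kc_def by auto
  have Kcinj: "inj_on Kc (cells Q)"
  proof (rule inj_onI)
    fix A B assume "A \<in> cells Q" "B \<in> cells Q" "Kc A = Kc B"
    then obtain v where "v \<in> Kc A" "v \<in> Kc B" using Kcne by blast
    thus "A = B" unfolding Kc_def by auto
  qed
  have cp: "clique_part ?V H P"
    unfolding clique_part_def
  proof (intro conjI)
    show "\<forall>C\<in>P. C \<noteq> {} \<and> C \<subseteq> ?V \<and> (\<forall>x\<in>C. \<forall>y\<in>C. x \<noteq> y \<longrightarrow> {x, y} \<in> H)"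
    proof
      fix C assume "C \<in> P"
      then obtain A where A: "A \<in> cells Q" "C = Kc A" unfolding P_def by blast
      show "C \<noteq> {} \<and> C \<subseteq> ?V \<and> (\<forall>x\<in>C. \<forall>y\<in>C. x \<noteq> y \<longrightarrow> {x, y} \<in> H)"
        using Kcne[OF A(1)] intedge cellne[OF A(1)] unfolding A(2) Kc_def by auto
    qed
    show "\<forall>C\<in>P. \<forall>D\<in>P. C \<noteq> D \<longrightarrow> C \<inter> D = {}"
      unfolding P_def Kc_def by auto
  qed
  have ncH: "\<not> (\<exists>cs. induced_cycle ?V H cs)" using chH unfolding chordal_def by blast
  have ncQ: "\<not> (\<exists>cs. induced_cycle P (Qt H P) cs)" by (rule quot_chordal[OF finV cp ncH])
  have chF: "chordal (cells Q) (Fall Q H)"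
    unfolding chordal_def
  proof (intro conjI notI)
    show "is_graph (cells Q) (Fall Q H)" unfolding is_graph_def Fall_def by blast
    assume "\<exists>cs. induced_cycle (cells Q) (Fall Q H) cs"
    then obtain cs where cs: "induced_cycle (cells Q) (Fall Q H) cs" by blast
    have sc: "set cs \<subseteq> cells Q" using cs unfolding cyc_unf by auto
    have "induced_cycle P (Qt H P) (map Kc cs)"
    proof (rule cycle_map[OF cs])
      show "inj_on Kc (set cs)" using Kcinj sc inj_on_subset by blast
      show "Kc ` set cs \<subseteq> P" using sc unfolding P_def by auto
      fix A B assume AB: "A \<in> set cs" "B \<in> set cs" "A \<noteq> B"
      have "Kc A \<noteq> Kc B" using AB sc Kcinj by (auto dest: inj_onD)
      then show "({Kc A, Kc B} \<in> Qt H P) = ({A, B} \<in> Fall Q H)"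
        unfolding Qt_mem Fall_mem using AB sc unfolding P_def Kc_def by auto
    qed
    then show False using ncQ by blast
  qed
  have sub: "int_star_edges Q \<subseteq> Fall Q H"
  proof
    fix e assume "e \<in> int_star_edges Q"
    then obtain A B where AB: "e = {A,B}" "A \<in> cells Q" "B \<in> cells Q" "A \<noteq> B" "A \<inter> B \<noteq> {}"
      unfolding int_star_edges_def by blast
    have "\<forall>v\<in>int_vertices Q. \<forall>w\<in>int_vertices Q. fst v = A \<longrightarrow> fst w = B \<longrightarrow> {v,w} \<in> H"
    proof (intro ballI impI)
      fix v w assume vw: "v \<in> int_vertices Q" "w \<in> int_vertices Q" "fst v = A" "fst w = B"
      hence "v \<noteq> w" using AB(4) by auto
      thus "{v,w} \<in> H" using intedge vw AB(5) by simp
    qed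
    thus "e \<in> Fall Q H" unfolding AB(1) Fall_mem using AB by simp
  qed
  have dis: "Fall Q H \<inter> forb_edges Q = {}"
  proof (rule ccontr)
    assume "Fall Q H \<inter> forb_edges Q \<noteq> {}"
    then obtain e where e: "e \<in> Fall Q H" "e \<in> forb_edges Q" by blast
    then obtain A B \<pi> where AB: "e = {A,B}" "A \<noteq> B" "\<pi> \<in> Q" "A \<in> \<pi>" "B \<in> \<pi>"
      unfolding forb_edges_def by blast
    have "(A, \<pi>) \<in> ?V" "(B, \<pi>) \<in> ?V" using AB unfolding int_vertices_def by auto
    hence "{(A, \<pi>), (B, \<pi>)} \<in> H" using e(1) unfolding AB(1) Fall_mem by auto
    thus False using rH AB by blast
  qed
  have phis: "Phi Q (Fall Q H) \<subseteq> H"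
  proof
    fix e assume "e \<in> Phi Q (Fall Q H)"
    then obtain v w where vw: "e = {v,w}" "v \<in> ?V" "w \<in> ?V" "v \<noteq> w" "fst v = fst w \<or> {fst v, fst w} \<in> Fall Q H"
      unfolding Phi_def by blast
    show "e \<in> H"
    proof (cases "fst v = fst w")
      case True then show ?thesis using intedge vw vne by auto
    next
      case False then show ?thesis using vw unfolding Fall_mem by auto
    qed
  qed
  show ?thesis using chF sub dis phis unfolding chordal_sandwich_def by blast
qed




lemma sw_graph: "chordal_sandwich (cells Q) (int_star_edges Q) (forb_edges Q) F \<Longrightarrow> is_graph (cells Q) F"
  unfolding chordal_sandwich_def chordal_def by blast

theorem theorem5:
  fixes X :: "'a set" and Q :: "'a set set set"
  assumes "finite X"
    and "\<forall>\<pi>\<in>Q. partial_partition X \<pi>"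
  shows "\<exists>f. bij_betw f {E'. minimal_restricted_chordal_completion Q E'}
                        {E'. minimal_chordal_sandwich (cells Q) (int_star_edges Q) (forb_edges Q) E'}"
proof -
  let ?SW = "chordal_sandwich (cells Q) (int_star_edges Q) (forb_edges Q)"
  let ?MS = "{E'. minimal_chordal_sandwich (cells Q) (int_star_edges Q) (forb_edges Q) E'}"
  let ?MC = "{E'. minimal_restricted_chordal_completion Q E'}"
  have key': "?SW (Fall Q H) \<and> Phi Q (Fall Q H) \<subseteq> H" if "restricted_chordal_completion Q H" for H
    using key[OF assms that] .
  have phieq: "F1 = F2" if "?SW F1" "?SW F2" "Phi Q F1 = Phi Q F2" for F1 F2
    using phi_rev[OF sw_graph[OF that(1)]] phi_rev[OF sw_graph[OF that(2)]] that(3) by blast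
  have inj: "inj_on (Phi Q) ?MS"
    by (rule inj_onI) (use phieq in \<open>auto simp: minimal_chordal_sandwich_def\<close>)
  have img1: "Phi Q ` ?MS \<subseteq> ?MC"
  proof
    fix G assume "G \<in> Phi Q ` ?MS"
    then obtain F where F: "minimal_chordal_sandwich (cells Q) (int_star_edges Q) (forb_edges Q) F" "G = Phi Q F"
      by blast
    have sF: "?SW F" and mF: "\<And>F''. F'' \<subset> F \<Longrightarrow> \<not> ?SW F''" using F(1) unfolding minimal_chordal_sandwich_def by auto
    have rG: "restricted_chordal_completion Q G" using phi_restricted[OF sF] F(2) by simp
    have "\<not> restricted_chordal_completion Q E''" if "E'' \<subset> G" for E''
    proof
      assume r: "restricted_chordal_completion Q E''"
      note k = key'[OF r]
      have "Phi Q (Fall Q E'') \<subseteq> Phi Q F" using k that F(2) by blast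
      hence sub: "Fall Q E'' \<subseteq> F" using phi_rev[OF sw_graph] k by blast
      have "Fall Q E'' \<noteq> F" using k that F(2) by blast
      hence "Fall Q E'' \<subset> F" using sub by blast
      thus False using mF k by blast
    qed
    thus "G \<in> ?MC" using rG unfolding minimal_restricted_chordal_completion_def by blast
  qed
  have img2: "?MC \<subseteq> Phi Q ` ?MS"
  proof
    fix H assume "H \<in> ?MC"
    hence rH: "restricted_chordal_completion Q H" and mH: "\<And>E''. E'' \<subset> H \<Longrightarrow> \<not> restricted_chordal_completion Q E''"
      unfolding minimal_restricted_chordal_completion_def by auto
    define F where "F = Fall Q H"
    have sF: "?SW F" and sub: "Phi Q F \<subseteq> H" using key'[OF rH] unfolding F_def by auto
    have "Phi Q F = H" using mH[of "Phi Q F"] phi_restricted[OF sF] sub by blast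
    moreover have "\<not> ?SW F''" if "F'' \<subset> F" for F''
    proof
      assume s'': "?SW F''"
      have "Phi Q F'' \<subseteq> Phi Q F" using phi_mono that by blast
      moreover have "Phi Q F'' \<noteq> Phi Q F" using phieq[OF s'' sF] that by blast
      ultimately have "Phi Q F'' \<subset> H" using \<open>Phi Q F = H\<close> by blast
      thus False using mH phi_restricted[OF s''] by blast
    qed
    ultimately show "H \<in> Phi Q ` ?MS" using sF unfolding minimal_chordal_sandwich_def by blast
  qed
  have "bij_betw (Phi Q) ?MS ?MC" unfolding bij_betw_def using inj img1 img2 by blast
  hence "bij_betw (inv_into ?MS (Phi Q)) ?MC ?MS" by (rule bij_betw_inv_into)
  thus ?thesis by blast
qed


end
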